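(* Let $G=(V,E)$ be a directed graph, $s\neq t$ vertices, $k\ge 2$ an integer and $e(u,v)\in E$. Suppose $EV^*_1(s,u)$ and $EV^*_{k-2}(v,t)$ both exist. Then $EV^*_1(s,u)\cap EV^*_{k-2}(v,t)=\emptyset$ if and only if $e(u,v)$ is an edge of $SPG_k(s,t)$.
   Context: A path from $x$ to $y$ in $G$ is a vertex sequence $x=v_0,\dots,v_m=y$ with $(v_{i-1},v_i)\in E$; its length is $m$ and $V(p)$, $E(p)$ are its vertex and edge sets. A simple path has no repeated vertex. $SPG_k(s,t)$ is the subgraph of $G$ formed by the union of vertex sets and edge sets of all simple paths from $s$ to $t$ of length at most $k$. For a vertex $u$ and integer $l\ge 0$, $EV^*_l(s,u)$ exists iff there is at least one simple path from $s$ to $u$ of length at most $l$ not containing $t$, and then $EV^*_l(s,u)$ is the intersection of $V(p)$ over all such paths. Symmetrically, $EV^*_l(v,t)$ exists iff there is at least one simple path from $v$ to $t$ of length at most $l$ not containing $s$, and then it is the intersection of $V(p)$ over all such paths. *)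

theory Defs
  imports Main
begin

definition is_path :: "('a \<times> 'a) set \<Rightarrow> 'a list \<Rightarrow> 'a \<Rightarrow> 'a \<Rightarrow> bool" where
  "is_path E p x y \<longleftrightarrow> p \<noteq> [] \<and> hd p = x \<and> last p = y \<and>
     (\<forall>i. Suc i < length p \<longrightarrow> (p ! i, p ! Suc i) \<in> E)"

definition path_len :: "'a list \<Rightarrow> nat" where
  "path_len p = length p - 1"

definition path_edges :: "'a list \<Rightarrow> ('a \<times> 'a) set" where
  "path_edges p = set (zip p (tl p))"

definition simple_paths :: "('a \<times> 'a) set \<Rightarrow> nat \<Rightarrow> 'a \<Rightarrow> 'a \<Rightarrow> 'a list set" where
  "simple_paths E l x y = {p. is_path E p x y \<and> distinct p \<and> path_len p \<le> l}"

definition SPG_vertices :: "('a \<times> 'a) set \<Rightarrow> nat \<Rightarrow> 'a \<Rightarrow> 'a \<Rightarrow> 'a set" where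
  "SPG_vertices E k s t = (\<Union>p \<in> simple_paths E k s t. set p)"

definition SPG_edges :: "('a \<times> 'a) set \<Rightarrow> nat \<Rightarrow> 'a \<Rightarrow> 'a \<Rightarrow> ('a \<times> 'a) set" where
  "SPG_edges E k s t = (\<Union>p \<in> simple_paths E k s t. path_edges p)"

(* EV*_l(x,y) avoiding vertex w: the relevant simple paths are those from x to y of
   length <= l not containing w.  For EV*_l(s,u) take w = t; for EV*_l(v,t) take w = s. *)
definition EV_paths :: "('a \<times> 'a) set \<Rightarrow> 'a \<Rightarrow> nat \<Rightarrow> 'a \<Rightarrow> 'a \<Rightarrow> 'a list set" where
  "EV_paths E w l x y = {p \<in> simple_paths E l x y. w \<notin> set p}"

definition EV_exists :: "('a \<times> 'a) set \<Rightarrow> 'a \<Rightarrow> nat \<Rightarrow> 'a \<Rightarrow> 'a \<Rightarrow> bool" where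
  "EV_exists E w l x y \<longleftrightarrow> EV_paths E w l x y \<noteq> {}"

definition EV :: "('a \<times> 'a) set \<Rightarrow> 'a \<Rightarrow> nat \<Rightarrow> 'a \<Rightarrow> 'a \<Rightarrow> 'a set" where
  "EV E w l x y = (\<Inter>p \<in> EV_paths E w l x y. set p)"

end

theory Submission
  imports Defs
begin

lemma is_path_drop:
  assumes "is_path E p x y" "n < length p"
  shows "is_path E (drop n p) (p ! n) y"
  using assms unfolding is_path_def
  by (auto simp: hd_drop_conv_nth last_drop)

lemma distinct_drop_notin:
  assumes "distinct p" "j < n" "n \<le> length p"
  shows "p ! j \<notin> set (drop n p)"
proof
  assume "p ! j \<in> set (drop n p)"
  then obtain m where m: "m < length (drop n p)" "drop n p ! m = p ! j"
    by (auto simp: in_set_conv_nth)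
  hence "p ! (n + m) = p ! j" using assms by simp
  hence "n + m = j" using assms m by (simp add: nth_eq_iff_index_eq)
  thus False using assms by simp
qed

lemma edge_nth:
  assumes "(u, v) \<in> path_edges p"
  shows "\<exists>i. Suc i < length p \<and> p ! i = u \<and> p ! Suc i = v"
  using assms unfolding path_edges_def
  apply (auto simp: set_zip nth_tl)
  subgoal for i by (rule exI[of _ i]) auto
  done

lemma EV1_paths:
  assumes "q \<in> EV_paths E t 1 s u"
  shows "(q = [s] \<and> u = s) \<or> (q = [s, u] \<and> (s, u) \<in> E \<and> s \<noteq> u \<and> u \<noteq> t \<and> s \<noteq> t)"
proof -
  have q: "q \<noteq> []" "hd q = s" "last q = u" "length q \<le> 2" "distinct q" "t \<notin> set q"
    "\<forall>i. Suc i < length q \<longrightarrow> (q ! i, q ! Suc i) \<in> E"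
    using assms unfolding EV_paths_def simple_paths_def is_path_def path_len_def by auto
  show ?thesis
  proof (cases "length q = 1")
    case True
    then obtain a where "q = [a]" by (cases q) auto
    thus ?thesis using q by auto
  next
    case False
    have "length q \<noteq> 0" using q by simp
    then have "length q = 2" using q(4) False by linarith
    then obtain a b where ab: "q = [a, b]"
      by (metis One_nat_def Suc_1 length_0_conv length_Suc_conv)
    have "(q ! 0, q ! Suc 0) \<in> E" using q(7) ab by auto
    thus ?thesis using q ab by auto
  qed
qed

lemma EV_sub:
  assumes "q \<in> EV_paths E w l x y"
  shows "EV E w l x y \<subseteq> set q"
  using assms unfolding EV_def by auto

lemma is_path_Cons2:
  assumes "(a, hd q) \<in> E" "is_path E q x y"
  shows "is_path E (a # q) a y"
  using assms unfolding is_path_def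
  apply (auto simp: nth_Cons' hd_conv_nth)
  subgoal for i by (drule spec[of _ "i - 1"]) auto
  done

theorem lemma4p6:
  fixes E :: "('a \<times> 'a) set" and s t u v :: 'a and k :: nat
  assumes "s \<noteq> t" and "k \<ge> 2" and "(u, v) \<in> E"
    and "EV_exists E t 1 s u" and "EV_exists E s (k - 2) v t"
  shows "EV E t 1 s u \<inter> EV E s (k - 2) v t = {} \<longleftrightarrow> (u, v) \<in> SPG_edges E k s t"
proof -
  obtain r where r: "r \<in> EV_paths E t 1 s u" using assms(4) unfolding EV_exists_def by auto
  obtain q0 where q0: "q0 \<in> EV_paths E s (k - 2) v t" using assms(5) unfolding EV_exists_def by auto
  have q0p: "is_path E q0 v t" "distinct q0" "s \<notin> set q0" "length q0 \<le> k - 1"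
    using q0 assms(2) unfolding EV_paths_def simple_paths_def path_len_def by auto
  have vs: "v \<noteq> s" using q0p unfolding is_path_def by (metis hd_in_set)
  have EV2s: "s \<notin> EV E s (k - 2) v t" using EV_sub[OF q0] q0p by auto
  show ?thesis
  proof (cases "u = s")
    case True
    have "EV E t 1 s u \<subseteq> {s}" using EV_sub[OF r] EV1_paths[OF r] True by auto
    hence L: "EV E t 1 s u \<inter> EV E s (k - 2) v t = {}" using EV2s by auto
    let ?p = "s # q0"
    have hq: "hd q0 = v" "q0 \<noteq> []" using q0p unfolding is_path_def by auto
    have "is_path E ?p s t" using is_path_Cons2[of s q0 E v t] q0p hq assms(3) True by auto
    moreover have "distinct ?p" using q0p by auto
    moreover have "path_len ?p \<le> k" using q0p assms(2) unfolding path_len_def by auto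
    moreover have "(u, v) \<in> path_edges ?p" using hq True unfolding path_edges_def
      by (cases q0) auto
    ultimately have "(u, v) \<in> SPG_edges E k s t"
      unfolding SPG_edges_def simple_paths_def by blast
    thus ?thesis using L by simp
  next
    case False
    hence rr: "r = [s, u]" "(s, u) \<in> E" "u \<noteq> t" using EV1_paths[OF r] by auto
    have EV1: "EV E t 1 s u = {s, u}"
    proof -
      have "\<forall>p \<in> EV_paths E t 1 s u. p = [s, u]"
      proof
        fix p assume "p \<in> EV_paths E t 1 s u"
        from EV1_paths[OF this] False show "p = [s, u]" by auto
      qed
      hence "set r \<subseteq> EV E t 1 s u" unfolding EV_def using rr(1) by (simp add: INT_greatest) (metis list.set_intros(1,2))
      hence "EV E t 1 s u = set r" using EV_sub[OF r] by blast
      thus ?thesis using rr(1) by simp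
    qed
    have "EV E t 1 s u \<inter> EV E s (k - 2) v t = {} \<longleftrightarrow> u \<notin> EV E s (k - 2) v t"
      using EV1 EV2s by auto
    also have "\<dots> \<longleftrightarrow> (u, v) \<in> SPG_edges E k s t"
    proof
      assume "u \<notin> EV E s (k - 2) v t"
      then obtain q where q: "q \<in> EV_paths E s (k - 2) v t" "u \<notin> set q"
        unfolding EV_def by auto
      have qp: "is_path E q v t" "distinct q" "s \<notin> set q" "length q \<le> k - 1"
        using q assms(2) unfolding EV_paths_def simple_paths_def path_len_def by auto
      have hq: "hd q = v" "q \<noteq> []" using qp unfolding is_path_def by auto
      let ?p = "s # u # q"
      have "is_path E (u # q) u t" using is_path_Cons2[of u q E v t] qp hq assms(3) by auto
      hence "is_path E ?p s t" using is_path_Cons2[of s "u # q" E u t] rr by auto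
      moreover have "distinct ?p" using qp q False by auto
      moreover have "path_len ?p \<le> k" using qp assms(2) unfolding path_len_def by auto
      moreover have "(u, v) \<in> path_edges ?p" using hq unfolding path_edges_def
        by (cases q) auto
      ultimately show "(u, v) \<in> SPG_edges E k s t"
        unfolding SPG_edges_def simple_paths_def by blast
    next
      assume "(u, v) \<in> SPG_edges E k s t"
      then obtain p where p: "p \<in> simple_paths E k s t" "(u, v) \<in> path_edges p"
        unfolding SPG_edges_def by auto
      have pp: "is_path E p s t" "distinct p" "length p \<le> Suc k"
        using p unfolding simple_paths_def path_len_def by auto
      obtain i where i: "Suc i < length p" "p ! i = u" "p ! Suc i = v"
        using edge_nth[OF p(2)] by auto
      have p0: "p ! 0 = s" using pp unfolding is_path_def by (metis hd_conv_nth)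
      have i0: "i \<noteq> 0" using i p0 False by (metis)
      let ?q = "drop (Suc i) p"
      have "is_path E ?q v t" using is_path_drop[OF pp(1) i(1)] i by simp
      moreover have "distinct ?q" using pp by simp
      moreover have "s \<notin> set ?q" using distinct_drop_notin[OF pp(2), of 0 "Suc i"] p0 i by simp
      moreover have "u \<notin> set ?q" using distinct_drop_notin[OF pp(2), of i "Suc i"] i by simp
      moreover have "path_len ?q \<le> k - 2" using i0 pp i unfolding path_len_def by simp
      ultimately have "?q \<in> EV_paths E s (k - 2) v t" "u \<notin> set ?q"
        unfolding EV_paths_def simple_paths_def by auto
      thus "u \<notin> EV E s (k - 2) v t" by (meson EV_sub subsetD)
    qed
    finally show ?thesis .
  qed
qed

end
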